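(* Let $M\ge 2$ be an integer, $\sigma>0$, and fix an index $m\in\{1,\dots,M\}$. For complex numbers $c_{1,m},\dots,c_{M,m}$, let $n_1,\dots,n_M$ be independent circularly-symmetric complex Gaussian random variables, $n_{m'}\sim\mathcal{CN}(0,2\sigma^2)$ (real and imaginary parts independent, each $\mathcal N(0,\sigma^2)$), and set $X_{m'}=|c_{m',m}+n_{m'}|$ for $m'=1,\dots,M$. Define the conditional correct detection probability $$P_{c,m}=P\big(X_m> X_{m'}\ \text{for all } m'\in\{1,\dots,M\},\ m'\neq m\big)=\int_0^\infty f_{X_m}(r;|c_{m,m}|)\prod_{m'\neq m}\Big(1-Q_1\big(\tfrac{|c_{m',m}|}{\sigma},\tfrac{r}{\sigma}\big)\Big)\,dr,$$ which depends only on the amplitudes $|c_{1,m}|,\dots,|c_{M,m}|$. Then $P_{c,m}$ is monotonically increasing in the desired signal amplitude $|c_{m,m}|$, and monotonically decreasing in each interfering amplitude $|c_{m',m}|$, for every $m'\neq m$ (the other amplitudes being held fixed).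
   Context: $f_{X}(r;\mu)=\frac{r}{\sigma^2}\exp\!\big(-\frac{r^2+\mu^2}{2\sigma^2}\big)I_0\!\big(\frac{r\mu}{\sigma^2}\big)$ for $r\ge0$ is the Rician density with non-centrality $\mu\ge0$ and scale $\sigma$, where $I_0$ is the modified Bessel function of the first kind of order zero; its CDF is $1-Q_1(\mu/\sigma,r/\sigma)$, where $Q_1$ is the first-order Marcum Q-function. Interpretation: $c_{m',m}$ is the effective channel coefficient from transmit port $m$ to receive port $m'$ and the detector picks the port of maximum received amplitude. *)

theory Defs
  imports "HOL-Probability.Probability"
begin

text \<open>Density of a circularly-symmetric complex Gaussian CN(0, 2 sigma^2) on the complex
plane (identified with R^2, Lebesgue measure): real and imaginary parts are independent N(0, sigma^2).\<close>
definition cgauss_density :: "real \<Rightarrow> complex \<Rightarrow> real" where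
  "cgauss_density \<sigma> z = exp (- (cmod z)\<^sup>2 / (2 * \<sigma>\<^sup>2)) / (2 * pi * \<sigma>\<^sup>2)"

definition cgauss :: "real \<Rightarrow> complex measure" where
  "cgauss \<sigma> = density lborel (\<lambda>z. ennreal (cgauss_density \<sigma> z))"

definition noise_measure :: "nat \<Rightarrow> real \<Rightarrow> (nat \<Rightarrow> complex) measure" where
  "noise_measure M \<sigma> = PiM {1..M} (\<lambda>_. cgauss \<sigma>)"

text \<open>Conditional correct detection probability P_{c,m}, where c k stands for c_{k,m}:
  P( |c_m + n_m| > |c_k + n_k| for all k in {1..M}, k \<noteq> m ).\<close>
definition Pc :: "nat \<Rightarrow> real \<Rightarrow> nat \<Rightarrow> (nat \<Rightarrow> complex) \<Rightarrow> real" where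
  "Pc M \<sigma> m c = measure (noise_measure M \<sigma>)
     {n \<in> space (noise_measure M \<sigma>).
        \<forall>k\<in>{1..M}. k \<noteq> m \<longrightarrow> cmod (c k + n k) < cmod (c m + n m)}"

end

theory Submission
  imports Defs
begin



lemma shear1:
  fixes f :: "real \<times> real \<Rightarrow> ennreal"
  assumes f[measurable]: "f \<in> borel_measurable (lborel \<Otimes>\<^sub>M lborel)"
  shows "(\<integral>\<^sup>+p. f (fst p + k * snd p + t, snd p) \<partial>(lborel \<Otimes>\<^sub>M lborel)) = integral\<^sup>N (lborel \<Otimes>\<^sub>M lborel) f"
proof -
  have m2: "(\<lambda>p. f (fst p + k * snd p + t, snd p)) \<in> borel_measurable (lborel \<Otimes>\<^sub>M lborel)"
    by measurable
  have "(\<integral>\<^sup>+p. f (fst p + k * snd p + t, snd p) \<partial>(lborel \<Otimes>\<^sub>M lborel)) =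
      (\<integral>\<^sup>+y. \<integral>\<^sup>+x. f (x + k * y + t, y) \<partial>lborel \<partial>lborel)"
    using lborel_pair.nn_integral_snd[OF m2] by simp
  also have "\<dots> = (\<integral>\<^sup>+y. \<integral>\<^sup>+x. f (x, y) \<partial>lborel \<partial>lborel)"
  proof (rule nn_integral_cong)
    fix y :: real
    have [measurable]: "(\<lambda>x. f (x, y)) \<in> borel_measurable borel" by measurable
    show "(\<integral>\<^sup>+x. f (x + k * y + t, y) \<partial>lborel) = (\<integral>\<^sup>+x. f (x, y) \<partial>lborel)"
      using nn_integral_real_affine[of "\<lambda>x. f (x, y)" 1 "k * y + t"]
      by (simp add: add.commute add.left_commute)
  qed
  also have "\<dots> = integral\<^sup>N (lborel \<Otimes>\<^sub>M lborel) f"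
    using lborel_pair.nn_integral_snd[OF f] by simp
  finally show ?thesis .
qed

lemma shear2:
  fixes f :: "real \<times> real \<Rightarrow> ennreal"
  assumes f[measurable]: "f \<in> borel_measurable (lborel \<Otimes>\<^sub>M lborel)"
  shows "(\<integral>\<^sup>+p. f (fst p, snd p + k * fst p + t) \<partial>(lborel \<Otimes>\<^sub>M lborel)) = integral\<^sup>N (lborel \<Otimes>\<^sub>M lborel) f"
proof -
  have m2: "(\<lambda>p. f (fst p, snd p + k * fst p + t)) \<in> borel_measurable (lborel \<Otimes>\<^sub>M lborel)"
    by measurable
  have "(\<integral>\<^sup>+p. f (fst p, snd p + k * fst p + t) \<partial>(lborel \<Otimes>\<^sub>M lborel)) =
      (\<integral>\<^sup>+x. \<integral>\<^sup>+y. f (x, y + k * x + t) \<partial>lborel \<partial>lborel)"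
    using lborel.nn_integral_fst[OF m2] by simp
  also have "\<dots> = (\<integral>\<^sup>+x. \<integral>\<^sup>+y. f (x, y) \<partial>lborel \<partial>lborel)"
  proof (rule nn_integral_cong)
    fix x :: real
    have [measurable]: "(\<lambda>y. f (x, y)) \<in> borel_measurable borel" by measurable
    show "(\<integral>\<^sup>+y. f (x, y + k * x + t) \<partial>lborel) = (\<integral>\<^sup>+y. f (x, y) \<partial>lborel)"
      using nn_integral_real_affine[of "\<lambda>y. f (x, y)" 1 "k * x + t"]
      by (simp add: add.commute add.left_commute)
  qed
  also have "\<dots> = integral\<^sup>N (lborel \<Otimes>\<^sub>M lborel) f"
    using lborel.nn_integral_fst[OF f] by simp
  finally show ?thesis .
qed

lemma diag_scale:
  fixes f :: "real \<times> real \<Rightarrow> ennreal"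
  assumes f[measurable]: "f \<in> borel_measurable (lborel \<Otimes>\<^sub>M lborel)"
    and a: "a \<noteq> 0" and d: "\<bar>a * d\<bar> = 1"
  shows "(\<integral>\<^sup>+p. f (a * fst p + s, d * snd p + t) \<partial>(lborel \<Otimes>\<^sub>M lborel)) = integral\<^sup>N (lborel \<Otimes>\<^sub>M lborel) f"
proof -
  have d0: "d \<noteq> 0" using d by auto
  have m2: "(\<lambda>p. f (a * fst p + s, d * snd p + t)) \<in> borel_measurable (lborel \<Otimes>\<^sub>M lborel)"
    by measurable
  have "(\<integral>\<^sup>+p. f (a * fst p + s, d * snd p + t) \<partial>(lborel \<Otimes>\<^sub>M lborel)) =
      (\<integral>\<^sup>+x. \<integral>\<^sup>+y. f (a * x + s, d * y + t) \<partial>lborel \<partial>lborel)"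
    using lborel.nn_integral_fst[OF m2] by simp
  also have "\<dots> = (\<integral>\<^sup>+x. ennreal \<bar>a\<bar> * \<integral>\<^sup>+y. f (a * x + s, y) \<partial>lborel \<partial>lborel)"
  proof (rule nn_integral_cong)
    fix x :: real
    have [measurable]: "(\<lambda>y. f (a * x + s, y)) \<in> borel_measurable borel" by measurable
    have "(\<integral>\<^sup>+y. f (a * x + s, y) \<partial>lborel) = ennreal \<bar>d\<bar> * (\<integral>\<^sup>+y. f (a * x + s, d * y + t) \<partial>lborel)"
      using nn_integral_real_affine[of "\<lambda>y. f (a * x + s, y)" d t] d0
      by (simp add: add.commute)
    then have "ennreal \<bar>a\<bar> * (\<integral>\<^sup>+y. f (a * x + s, y) \<partial>lborel) = ennreal (\<bar>a\<bar> * \<bar>d\<bar>) * (\<integral>\<^sup>+y. f (a * x + s, d * y + t) \<partial>lborel)"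
      by (simp add: ennreal_mult mult.assoc)
    also have "\<bar>a\<bar> * \<bar>d\<bar> = 1" using d by (simp add: abs_mult)
    finally show "(\<integral>\<^sup>+y. f (a * x + s, d * y + t) \<partial>lborel) = ennreal \<bar>a\<bar> * \<integral>\<^sup>+y. f (a * x + s, y) \<partial>lborel"
      by simp
  qed
  also have "\<dots> = ennreal \<bar>a\<bar> * (\<integral>\<^sup>+x. \<integral>\<^sup>+y. f (a * x + s, y) \<partial>lborel \<partial>lborel)"
    by (rule nn_integral_cmult) measurable
  also have "\<dots> = (\<integral>\<^sup>+x. \<integral>\<^sup>+y. f (x, y) \<partial>lborel \<partial>lborel)"
    using nn_integral_real_affine[of "\<lambda>x. \<integral>\<^sup>+y. f (x, y) \<partial>lborel" a s] a
    by (simp add: add.commute)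
  also have "\<dots> = integral\<^sup>N (lborel \<Otimes>\<^sub>M lborel) f"
    using lborel.nn_integral_fst[OF f] by simp
  finally show ?thesis .
qed

lemma aff2_nz:
  fixes f :: "real \<times> real \<Rightarrow> ennreal"
  assumes f[measurable]: "f \<in> borel_measurable (lborel \<Otimes>\<^sub>M lborel)"
    and a: "\<alpha> \<noteq> 0" and D: "\<bar>\<alpha> * \<delta> - \<beta> * \<gamma>\<bar> = 1"
  shows "(\<integral>\<^sup>+p. f (\<alpha> * fst p + \<beta> * snd p + t1, \<gamma> * fst p + \<delta> * snd p + t2) \<partial>(lborel \<Otimes>\<^sub>M lborel))
     = integral\<^sup>N (lborel \<Otimes>\<^sub>M lborel) f"
proof -
  define D where "D = \<alpha> * \<delta> - \<beta> * \<gamma>"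
  have D0: "D \<noteq> 0" using D by (auto simp: D_def)
  define G where "G p = f (\<alpha> * fst p + \<beta> * snd p + t1, \<gamma> * fst p + \<delta> * snd p + t2)" for p
  define H where "H p = f (\<alpha> * fst p + t1, (D / \<alpha>) * snd p + t2)" for p
  have [measurable]: "G \<in> borel_measurable (lborel \<Otimes>\<^sub>M lborel)" unfolding G_def by measurable
  have [measurable]: "H \<in> borel_measurable (lborel \<Otimes>\<^sub>M lborel)" unfolding H_def by measurable
  have "integral\<^sup>N (lborel \<Otimes>\<^sub>M lborel) G = (\<integral>\<^sup>+p. G (fst p + (- \<beta> / \<alpha>) * snd p + 0, snd p) \<partial>(lborel \<Otimes>\<^sub>M lborel))"
    by (rule shear1[symmetric]) measurable
  also have "\<dots> = (\<integral>\<^sup>+p. H (fst p, snd p + (\<gamma> * \<alpha> / D) * fst p + 0) \<partial>(lborel \<Otimes>\<^sub>M lborel))"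
  proof (rule nn_integral_cong)
    fix p :: "real \<times> real"
    have e1: "\<alpha> * (fst p + - \<beta> / \<alpha> * snd p + 0) + \<beta> * snd p + t1 = \<alpha> * fst p + t1"
      using a by (simp add: field_simps)
    have e2: "\<gamma> * (fst p + - \<beta> / \<alpha> * snd p + 0) + \<delta> * snd p + t2 = D / \<alpha> * (snd p + \<gamma> * \<alpha> / D * fst p + 0) + t2"
      using a D0 by (simp add: field_simps D_def)
    show "G (fst p + - \<beta> / \<alpha> * snd p + 0, snd p) = H (fst p, snd p + \<gamma> * \<alpha> / D * fst p + 0)"
      unfolding G_def H_def using e1 e2 by simp
  qed
  also have "\<dots> = integral\<^sup>N (lborel \<Otimes>\<^sub>M lborel) H"
    by (rule shear2) measurable
  also have "\<dots> = integral\<^sup>N (lborel \<Otimes>\<^sub>M lborel) f"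
    unfolding H_def using D a by (intro diag_scale) (auto simp: D_def)
  finally show ?thesis unfolding G_def .
qed

lemma aff2:
  fixes f :: "real \<times> real \<Rightarrow> ennreal"
  assumes f[measurable]: "f \<in> borel_measurable (lborel \<Otimes>\<^sub>M lborel)"
    and D: "\<bar>\<alpha> * \<delta> - \<beta> * \<gamma>\<bar> = 1"
  shows "(\<integral>\<^sup>+p. f (\<alpha> * fst p + \<beta> * snd p + t1, \<gamma> * fst p + \<delta> * snd p + t2) \<partial>(lborel \<Otimes>\<^sub>M lborel))
     = integral\<^sup>N (lborel \<Otimes>\<^sub>M lborel) f"
proof (cases "\<alpha> = 0")
  case False
  then show ?thesis using aff2_nz[OF f False D] by simp
next
  case True
  then have b: "\<alpha> + \<beta> \<noteq> 0" using D by auto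
  define G where "G p = f (\<alpha> * fst p + \<beta> * snd p + t1, \<gamma> * fst p + \<delta> * snd p + t2)" for p
  have [measurable]: "G \<in> borel_measurable (lborel \<Otimes>\<^sub>M lborel)" unfolding G_def by measurable
  have "integral\<^sup>N (lborel \<Otimes>\<^sub>M lborel) G = (\<integral>\<^sup>+p. G (fst p, snd p + 1 * fst p + 0) \<partial>(lborel \<Otimes>\<^sub>M lborel))"
    by (rule shear2[symmetric]) measurable
  also have "\<dots> = (\<integral>\<^sup>+p. f ((\<alpha> + \<beta>) * fst p + \<beta> * snd p + t1, (\<gamma> + \<delta>) * fst p + \<delta> * snd p + t2) \<partial>(lborel \<Otimes>\<^sub>M lborel))"
    unfolding G_def by (intro nn_integral_cong) (simp add: algebra_simps)
  also have "\<dots> = integral\<^sup>N (lborel \<Otimes>\<^sub>M lborel) f"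
    using D by (intro aff2_nz[OF f b]) (simp add: algebra_simps)
  finally show ?thesis unfolding G_def .
qed

lemma Complex_meas[measurable]:
  "(\<lambda>p. Complex (fst p) (snd p)) \<in> borel_measurable (borel \<Otimes>\<^sub>M borel)"
proof -
  have "(\<lambda>p::real\<times>real. Complex (fst p) (snd p)) = (\<lambda>p. of_real (fst p) + \<i> * of_real (snd p))"
    by (auto simp: Complex_eq)
  moreover have "(\<lambda>p::real\<times>real. of_real (fst p) + \<i> * of_real (snd p) :: complex) \<in> borel_measurable (borel \<Otimes>\<^sub>M borel)"
    by measurable
  ultimately show ?thesis by simp
qed

lemma lborel_complex_pair:
  "distr (lborel \<Otimes>\<^sub>M lborel) borel (\<lambda>p. Complex (fst p) (snd p)) = (lborel :: complex measure)"
proof (rule lborel_eqI[symmetric])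
  fix l u :: complex
  assume le: "\<And>b. b \<in> Basis \<Longrightarrow> l \<bullet> b \<le> u \<bullet> b"
  have le1: "Re l \<le> Re u" using le[of 1] by (simp add: Basis_complex_def)
  have le2: "Im l \<le> Im u" using le[of \<i>] by (simp add: Basis_complex_def)
  have pre: "(\<lambda>p. Complex (fst p) (snd p)) -` box l u \<inter> space (lborel \<Otimes>\<^sub>M lborel)
      = {Re l<..<Re u} \<times> {Im l<..<Im u}"
    by (auto simp: box_def Basis_complex_def space_pair_measure)
  have meas: "(\<lambda>p. Complex (fst p) (snd p)) \<in> (lborel \<Otimes>\<^sub>M lborel) \<rightarrow>\<^sub>M borel"
    by measurable
  show "emeasure (distr (lborel \<Otimes>\<^sub>M lborel) borel (\<lambda>p. Complex (fst p) (snd p))) (box l u) =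
        ennreal (\<Prod>b\<in>Basis. (u - l) \<bullet> b)"
    using le1 le2
    by (simp add: emeasure_distr[OF meas] pre lborel.emeasure_pair_measure_Times Basis_complex_def
        ennreal_mult[symmetric])
qed simp

lemma nn_integral_complex_pair:
  fixes H :: "complex \<Rightarrow> ennreal"
  assumes [measurable]: "H \<in> borel_measurable borel"
  shows "integral\<^sup>N lborel H = (\<integral>\<^sup>+p. H (Complex (fst p) (snd p)) \<partial>(lborel \<Otimes>\<^sub>M lborel))"
proof -
  have meas: "(\<lambda>p. Complex (fst p) (snd p)) \<in> (lborel \<Otimes>\<^sub>M lborel) \<rightarrow>\<^sub>M borel"
    by measurable
  show ?thesis
    by (subst lborel_complex_pair[symmetric]) (simp add: nn_integral_distr[OF meas])
qed

lemma measurable_Complex[measurable]: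
  assumes [measurable]: "f \<in> borel_measurable M" "g \<in> borel_measurable M"
  shows "(\<lambda>x. Complex (f x) (g x)) \<in> borel_measurable M"
proof -
  have "(\<lambda>x. Complex (f x) (g x)) = (\<lambda>x. of_real (f x) + \<i> * of_real (g x))"
    by (auto simp: Complex_eq)
  moreover have "(\<lambda>x. of_real (f x) + \<i> * of_real (g x) :: complex) \<in> borel_measurable M"
    by measurable
  ultimately show ?thesis by simp
qed

lemma affC:
  fixes H :: "complex \<Rightarrow> ennreal"
  assumes H[measurable]: "H \<in> borel_measurable borel"
    and D: "\<bar>\<alpha> * \<delta> - \<beta> * \<gamma>\<bar> = 1"
  shows "(\<integral>\<^sup>+z. H (Complex (\<alpha> * Re z + \<beta> * Im z + t1) (\<gamma> * Re z + \<delta> * Im z + t2)) \<partial>lborel)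
     = integral\<^sup>N lborel H"
proof -
  define K where "K p = H (Complex (fst p) (snd p))" for p
  have [measurable]: "K \<in> borel_measurable (lborel \<Otimes>\<^sub>M lborel)" unfolding K_def by measurable
  have "(\<integral>\<^sup>+z. H (Complex (\<alpha> * Re z + \<beta> * Im z + t1) (\<gamma> * Re z + \<delta> * Im z + t2)) \<partial>lborel)
    = (\<integral>\<^sup>+p. K (\<alpha> * fst p + \<beta> * snd p + t1, \<gamma> * fst p + \<delta> * snd p + t2) \<partial>(lborel \<Otimes>\<^sub>M lborel))"
    unfolding K_def by (subst nn_integral_complex_pair; (measurable | simp))
  also have "\<dots> = integral\<^sup>N (lborel \<Otimes>\<^sub>M lborel) K"
    by (rule aff2) (measurable, fact D)
  also have "\<dots> = integral\<^sup>N lborel H"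
    unfolding K_def by (subst nn_integral_complex_pair; (measurable | simp))
  finally show ?thesis .
qed

lemma cgauss_density_Complex:
  "cgauss_density \<sigma> (Complex x y) = normal_density 0 \<sigma> x * normal_density 0 \<sigma> y"
proof -
  have c: "(cmod (Complex x y))\<^sup>2 = x\<^sup>2 + y\<^sup>2" by (simp add: cmod_def)
  have s: "sqrt (2 * pi * \<sigma>\<^sup>2) * sqrt (2 * pi * \<sigma>\<^sup>2) = 2 * pi * \<sigma>\<^sup>2"
    by (simp add: real_sqrt_mult_self)
  show ?thesis
    unfolding cgauss_density_def normal_density_def c
    by (simp add: s exp_add[symmetric] add_divide_distrib diff_divide_distrib)
qed

lemma cgauss_density_nonneg: "0 \<le> cgauss_density \<sigma> z"
  by (simp add: cgauss_density_def)

lemma cgauss_density_meas[measurable]: "cgauss_density \<sigma> \<in> borel_measurable borel"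
  unfolding cgauss_density_def[abs_def] by measurable

lemma prob_space_cgauss:
  assumes s: "\<sigma> > 0"
  shows "prob_space (cgauss \<sigma>)"
proof
  have n1: "(\<integral>\<^sup>+x. ennreal (normal_density 0 \<sigma> x) \<partial>lborel) = 1"
  proof -
    interpret p: prob_space "density lborel (normal_density 0 \<sigma>)"
      using prob_space_normal_density s by blast
    show ?thesis using p.emeasure_space_1 by (simp add: emeasure_density)
  qed
  have "emeasure (cgauss \<sigma>) (space (cgauss \<sigma>)) = (\<integral>\<^sup>+z. ennreal (cgauss_density \<sigma> z) \<partial>lborel)"
    unfolding cgauss_def by (simp add: emeasure_density)
  also have "\<dots> = (\<integral>\<^sup>+p. ennreal (cgauss_density \<sigma> (Complex (fst p) (snd p))) \<partial>(lborel \<Otimes>\<^sub>M lborel))"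
    by (subst nn_integral_complex_pair; (measurable | simp))
  also have "\<dots> = (\<integral>\<^sup>+x. \<integral>\<^sup>+y. ennreal (normal_density 0 \<sigma> x) * ennreal (normal_density 0 \<sigma> y) \<partial>lborel \<partial>lborel)"
    by (subst lborel.nn_integral_fst[symmetric]) 
       (measurable, simp add: cgauss_density_Complex ennreal_mult normal_density_nonneg)
  also have "\<dots> = (\<integral>\<^sup>+x. ennreal (normal_density 0 \<sigma> x) * 1 \<partial>lborel)"
    by (intro nn_integral_cong) (simp add: nn_integral_cmult n1)
  also have "\<dots> = 1" using n1 by simp
  finally show "emeasure (cgauss \<sigma>) (space (cgauss \<sigma>)) = 1" .
qed

lemma g_alg:
  fixes a1 a2 c1 c2 y1 y2 u N :: real
  assumes hN: "N = (a1 - c1)\<^sup>2 + (a2 - c2)\<^sup>2"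
  assumes hu: "u * N = 2 * (y1 * (a1 - c1) + y2 * (a2 - c2)) + (a1\<^sup>2 + a2\<^sup>2 - c1\<^sup>2 - c2\<^sup>2)"
  shows "(a1 + (y1 - u * (a1 - c1)))\<^sup>2 + (a2 + (y2 - u * (a2 - c2)))\<^sup>2 = (c1 + y1)\<^sup>2 + (c2 + y2)\<^sup>2"
    and "(c1 + (y1 - u * (a1 - c1)))\<^sup>2 + (c2 + (y2 - u * (a2 - c2)))\<^sup>2 = (a1 + y1)\<^sup>2 + (a2 + y2)\<^sup>2"
    and "((y1 - u * (a1 - c1))\<^sup>2 + (y2 - u * (a2 - c2))\<^sup>2 - (y1\<^sup>2 + y2\<^sup>2)) * N = (a1\<^sup>2 + a2\<^sup>2 - c1\<^sup>2 - c2\<^sup>2) * ((a1 + y1)\<^sup>2 + (a2 + y2)\<^sup>2 - (c1 + y1)\<^sup>2 - (c2 + y2)\<^sup>2)"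
  using hN hu by algebra+

lemma g_det:
  fixes v1 v2 N :: real
  assumes "N = v1\<^sup>2 + v2\<^sup>2" "N \<noteq> 0"
  shows "(1 - 2 *  v1\<^sup>2/N) * (1 - 2 *  v2\<^sup>2/N) - (-2 *  v1* v2/N) * (-2 *  v1* v2/N) = -1"
proof -
  have e: "(N - 2 *  v1\<^sup>2)*(N - 2 *  v2\<^sup>2) - (2 *  v1* v2)*(2 *  v1* v2) = -(N*N)" using assms(1) by algebra
  have "(1 - 2 *  v1\<^sup>2/N) * (1 - 2 *  v2\<^sup>2/N) - (-2 *  v1* v2/N) * (-2 *  v1* v2/N)
      = ((N - 2 *  v1\<^sup>2)*(N - 2 *  v2\<^sup>2) - (2 *  v1* v2)*(2 *  v1* v2)) / (N*N)"
    using assms(2) by (simp add: field_simps)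
  also have "\<dots> = -1" using e assms(2) by simp
  finally show ?thesis .
qed

lemma ennreal_double_le: "(x::ennreal) + x \<le> y + y \<Longrightarrow> x \<le> y"
  by (meson add_strict_mono linorder_not_less)

lemma swap_le:
  fixes R :: "complex \<Rightarrow> complex" and F G :: "complex \<Rightarrow> ennreal"
  assumes R[measurable]: "R \<in> borel_measurable borel"
    and pres: "\<And>H. H \<in> borel_measurable borel \<Longrightarrow> (\<integral>\<^sup>+y. H (R y) \<partial>lborel) = integral\<^sup>N lborel H"
    and F[measurable]: "F \<in> borel_measurable borel" and G[measurable]: "G \<in> borel_measurable borel"
    and pt: "\<And>y. F y + F (R y) \<le> G y + G (R y)"
  shows "integral\<^sup>N lborel F \<le> integral\<^sup>N lborel G"
proof (rule ennreal_double_le)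
  have "integral\<^sup>N lborel F + integral\<^sup>N lborel F = integral\<^sup>N lborel F + (\<integral>\<^sup>+y. F (R y) \<partial>lborel)"
    using pres[OF F] by simp
  also have "\<dots> = (\<integral>\<^sup>+y. F y + F (R y) \<partial>lborel)"
    by (rule nn_integral_add[symmetric]) measurable
  also have "\<dots> \<le> (\<integral>\<^sup>+y. G y + G (R y) \<partial>lborel)"
    by (rule nn_integral_mono) (rule pt)
  also have "\<dots> = integral\<^sup>N lborel G + (\<integral>\<^sup>+y. G (R y) \<partial>lborel)"
    by (rule nn_integral_add) measurable
  also have "\<dots> = integral\<^sup>N lborel G + integral\<^sup>N lborel G"
    using pres[OF G] by simp
  finally show "integral\<^sup>N lborel F + integral\<^sup>N lborel F \<le> integral\<^sup>N lborel G + integral\<^sup>N lborel G" .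
qed

lemma cmod_sq: "(cmod z)\<^sup>2 = (Re z)\<^sup>2 + (Im z)\<^sup>2"
  by (simp add: cmod_def)

lemma refl_exists:
  fixes a c :: complex
  shows "\<exists>R. R \<in> borel_measurable borel \<and>
    (\<forall>H \<in> borel_measurable borel. (\<integral>\<^sup>+y. H (R y) \<partial>lborel) = integral\<^sup>N lborel H) \<and>
    (\<forall>y. cmod (a + R y) = cmod (c + y) \<and> cmod (c + R y) = cmod (a + y)) \<and>
    (cmod c \<le> cmod a \<longrightarrow> (\<forall>y. (cmod (a + y) \<le> cmod (c + y) \<longrightarrow> cmod (R y) \<le> cmod y) \<and>
                                (cmod (c + y) \<le> cmod (a + y) \<longrightarrow> cmod y \<le> cmod (R y))))"
proof (cases "a = c")
  case True
  then show ?thesis by (intro exI[of _ "\<lambda>y. y"]) auto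
next
  case False
  define v1 where "v1 = Re a - Re c"
  define v2 where "v2 = Im a - Im c"
  define N where "N = v1\<^sup>2 + v2\<^sup>2"
  define K where "K = (Re a)\<^sup>2 + (Im a)\<^sup>2 - (Re c)\<^sup>2 - (Im c)\<^sup>2"
  define u where "u y = (2 * (Re y * v1 + Im y * v2) + K) / N" for y
  define R where "R y = Complex (Re y - u y * v1) (Im y - u y * v2)" for y
  have Npos: "N > 0"
  proof -
    have "v1 \<noteq> 0 \<or> v2 \<noteq> 0" using False by (auto simp: v1_def v2_def complex_eq_iff)
    then show ?thesis unfolding N_def by (auto intro: add_pos_nonneg add_nonneg_pos)
  qed
  have hu: "u y * N = 2 * (Re y * (Re a - Re c) + Im y * (Im a - Im c)) + ((Re a)\<^sup>2 + (Im a)\<^sup>2 - (Re c)\<^sup>2 - (Im c)\<^sup>2)" for y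
    using Npos by (simp add: u_def v1_def v2_def K_def)
  have hN: "N = (Re a - Re c)\<^sup>2 + (Im a - Im c)\<^sup>2" by (simp add: N_def v1_def v2_def)
  note G = g_alg[OF hN hu]
  have Rm[measurable]: "R \<in> borel_measurable borel" unfolding R_def u_def[abs_def] by measurable
  have Raff: "R y = Complex ((1 - 2 *  v1\<^sup>2/N) * Re y + (-2 *  v1* v2/N) * Im y + (- K * v1 / N))
                             ((-2 *  v1* v2/N) * Re y + (1 - 2 *  v2\<^sup>2/N) * Im y + (- K * v2 / N))" for y
    using Npos unfolding R_def u_def by (simp add: field_simps power2_eq_square)
  have det: "\<bar>(1 - 2 *  v1\<^sup>2/N) * (1 - 2 *  v2\<^sup>2/N) - (-2 *  v1* v2/N) * (-2 *  v1* v2/N)\<bar> = 1"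
    using g_det[OF N_def] Npos by simp
  have pres: "(\<integral>\<^sup>+y. H (R y) \<partial>lborel) = integral\<^sup>N lborel H" if H: "H \<in> borel_measurable borel" for H
    unfolding Raff by (rule affC[OF H det])
  have e1: "cmod (a + R y) = cmod (c + y)" for y
  proof -
    have "(cmod (a + R y))\<^sup>2 = (cmod (c + y))\<^sup>2"
      unfolding cmod_sq using G(1)[of y] by (simp add: R_def v1_def v2_def)
    then show ?thesis by (simp add: power2_eq_iff_nonneg)
  qed
  have e2: "cmod (c + R y) = cmod (a + y)" for y
  proof -
    have "(cmod (c + R y))\<^sup>2 = (cmod (a + y))\<^sup>2"
      unfolding cmod_sq using G(2)[of y] by (simp add: R_def v1_def v2_def)
    then show ?thesis by (simp add: power2_eq_iff_nonneg)
  qed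
  have e3: "((cmod (R y))\<^sup>2 - (cmod y)\<^sup>2) * N = ((cmod a)\<^sup>2 - (cmod c)\<^sup>2) * ((cmod (a + y))\<^sup>2 - (cmod (c + y))\<^sup>2)" for y
    unfolding cmod_sq using G(3)[of y] by (simp add: R_def v1_def v2_def algebra_simps)
  have sgn: "(cmod (a + y) \<le> cmod (c + y) \<longrightarrow> cmod (R y) \<le> cmod y) \<and>
             (cmod (c + y) \<le> cmod (a + y) \<longrightarrow> cmod y \<le> cmod (R y))" if ca: "cmod c \<le> cmod a" for y
  proof (intro conjI impI)
    have K0: "(cmod a)\<^sup>2 - (cmod c)\<^sup>2 \<ge> 0" using ca by (simp add: power_mono)
    {
      assume "cmod (a + y) \<le> cmod (c + y)"
      then have "(cmod (a + y))\<^sup>2 - (cmod (c + y))\<^sup>2 \<le> 0" by (simp add: power_mono)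
      then have "((cmod (R y))\<^sup>2 - (cmod y)\<^sup>2) * N \<le> 0" unfolding e3 using K0 by (simp add: mult_nonneg_nonpos)
      then have "(cmod (R y))\<^sup>2 \<le> (cmod y)\<^sup>2" using Npos by (simp add: mult_le_0_iff)
      then show "cmod (R y) \<le> cmod y" by (simp add: power2_le_iff_abs_le)
    }
    {
      assume "cmod (c + y) \<le> cmod (a + y)"
      then have "(cmod (a + y))\<^sup>2 - (cmod (c + y))\<^sup>2 \<ge> 0" by (simp add: power_mono)
      then have "((cmod (R y))\<^sup>2 - (cmod y)\<^sup>2) * N \<ge> 0" unfolding e3 using K0 by simp
      then have "(cmod y)\<^sup>2 \<le> (cmod (R y))\<^sup>2" using Npos by (simp add: zero_le_mult_iff)
      then show "cmod y \<le> cmod (R y)" by (simp add: power2_le_iff_abs_le)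
    }
  qed
  show ?thesis
    by (intro exI[of _ R] conjI allI ballI impI) (use Rm pres e1 e2 sgn in auto)
qed

lemma phi_mono:
  assumes "cmod z \<le> cmod w"
  shows "cgauss_density \<sigma> w \<le> cgauss_density \<sigma> z"
proof -
  have "(cmod z)\<^sup>2 \<le> (cmod w)\<^sup>2" using assms by (simp add: power_mono)
  then have "- (cmod w)\<^sup>2 / (2 * \<sigma>\<^sup>2) \<le> - (cmod z)\<^sup>2 / (2 * \<sigma>\<^sup>2)"
    by (intro divide_right_mono) auto
  then show ?thesis unfolding cgauss_density_def
    by (intro divide_right_mono) auto
qed

lemma cgauss_integral:
  assumes [measurable]: "g \<in> borel_measurable borel"
  shows "integral\<^sup>N (cgauss \<sigma>) g = (\<integral>\<^sup>+y. ennreal (cgauss_density \<sigma> y) * g y \<partial>lborel)"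
  unfolding cgauss_def by (subst nn_integral_density) auto

lemma key_down:
  assumes ca: "cmod c \<le> cmod a" and S: "\<And>d d'. d \<in> S \<Longrightarrow> d' \<notin> S \<Longrightarrow> d < d'"
    and Sb[measurable]: "S \<in> sets borel"
  shows "(\<integral>\<^sup>+y. indicator S (cmod (a + y)) \<partial>cgauss \<sigma>) \<le> (\<integral>\<^sup>+y. indicator S (cmod (c + y)) \<partial>cgauss \<sigma>)"
proof -
  obtain R where Rm[measurable]: "R \<in> borel_measurable borel"
    and pres: "\<forall>H \<in> borel_measurable borel. (\<integral>\<^sup>+y. H (R y) \<partial>lborel) = integral\<^sup>N lborel H"
    and e: "\<forall>y. cmod (a + R y) = cmod (c + y) \<and> cmod (c + R y) = cmod (a + y)"
    and sg: "\<forall>y. (cmod (a + y) \<le> cmod (c + y) \<longrightarrow> cmod (R y) \<le> cmod y) \<and>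
                (cmod (c + y) \<le> cmod (a + y) \<longrightarrow> cmod y \<le> cmod (R y))"
    using refl_exists[of a c] ca by blast
  let ?p = "\<lambda>y. ennreal (cgauss_density \<sigma> y)"
  have "(\<integral>\<^sup>+y. ?p y * indicator S (cmod (a + y)) \<partial>lborel) \<le> (\<integral>\<^sup>+y. ?p y * indicator S (cmod (c + y)) \<partial>lborel)"
  proof (rule swap_le[OF Rm])
    show "\<And>H. H \<in> borel_measurable borel \<Longrightarrow> (\<integral>\<^sup>+y. H (R y) \<partial>lborel) = integral\<^sup>N lborel H"
      using pres by blast
    show "(\<lambda>y. ?p y * indicator S (cmod (a + y))) \<in> borel_measurable borel" by measurable
    show "(\<lambda>y. ?p y * indicator S (cmod (c + y))) \<in> borel_measurable borel" by measurable
    fix y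
    have ea: "cmod (a + R y) = cmod (c + y)" and ec: "cmod (c + R y) = cmod (a + y)" using e by auto
    show "?p y * indicator S (cmod (a + y)) + ?p (R y) * indicator S (cmod (a + R y))
        \<le> ?p y * indicator S (cmod (c + y)) + ?p (R y) * indicator S (cmod (c + R y))"
    proof (cases "cmod (a + y) \<in> S"; cases "cmod (c + y) \<in> S")
      assume A: "cmod (a + y) \<in> S" and C: "cmod (c + y) \<notin> S"
      then have "cmod (a + y) \<le> cmod (c + y)" using S by force
      then have "cmod (R y) \<le> cmod y" using sg by blast
      then have "cgauss_density \<sigma> y \<le> cgauss_density \<sigma> (R y)" by (rule phi_mono)
      then show ?thesis using A C by (simp add: ea ec ennreal_leI)
    next
      assume A: "cmod (a + y) \<notin> S" and C: "cmod (c + y) \<in> S"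
      then have "cmod (c + y) \<le> cmod (a + y)" using S by force
      then have "cmod y \<le> cmod (R y)" using sg by blast
      then have "cgauss_density \<sigma> (R y) \<le> cgauss_density \<sigma> y" by (rule phi_mono)
      then show ?thesis using A C by (simp add: ea ec ennreal_leI)
    qed (simp_all add: ea ec add.commute)
  qed
  then show ?thesis by (simp add: cgauss_integral)
qed

lemma key_up:
  assumes ca: "cmod c \<le> cmod a" and S: "\<And>d d'. d \<in> S \<Longrightarrow> d' \<notin> S \<Longrightarrow> d' < d"
    and Sb[measurable]: "S \<in> sets borel"
  shows "(\<integral>\<^sup>+y. indicator S (cmod (c + y)) \<partial>cgauss \<sigma>) \<le> (\<integral>\<^sup>+y. indicator S (cmod (a + y)) \<partial>cgauss \<sigma>)"
proof -
  obtain R where Rm[measurable]: "R \<in> borel_measurable borel"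
    and pres: "\<forall>H \<in> borel_measurable borel. (\<integral>\<^sup>+y. H (R y) \<partial>lborel) = integral\<^sup>N lborel H"
    and e: "\<forall>y. cmod (a + R y) = cmod (c + y) \<and> cmod (c + R y) = cmod (a + y)"
    and sg: "\<forall>y. (cmod (a + y) \<le> cmod (c + y) \<longrightarrow> cmod (R y) \<le> cmod y) \<and>
                (cmod (c + y) \<le> cmod (a + y) \<longrightarrow> cmod y \<le> cmod (R y))"
    using refl_exists[of a c] ca by blast
  let ?p = "\<lambda>y. ennreal (cgauss_density \<sigma> y)"
  have "(\<integral>\<^sup>+y. ?p y * indicator S (cmod (c + y)) \<partial>lborel) \<le> (\<integral>\<^sup>+y. ?p y * indicator S (cmod (a + y)) \<partial>lborel)"
  proof (rule swap_le[OF Rm])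
    show "\<And>H. H \<in> borel_measurable borel \<Longrightarrow> (\<integral>\<^sup>+y. H (R y) \<partial>lborel) = integral\<^sup>N lborel H"
      using pres by blast
    show "(\<lambda>y. ?p y * indicator S (cmod (a + y))) \<in> borel_measurable borel" by measurable
    show "(\<lambda>y. ?p y * indicator S (cmod (c + y))) \<in> borel_measurable borel" by measurable
    fix y
    have ea: "cmod (a + R y) = cmod (c + y)" and ec: "cmod (c + R y) = cmod (a + y)" using e by auto
    show "?p y * indicator S (cmod (c + y)) + ?p (R y) * indicator S (cmod (c + R y))
        \<le> ?p y * indicator S (cmod (a + y)) + ?p (R y) * indicator S (cmod (a + R y))"
    proof (cases "cmod (a + y) \<in> S"; cases "cmod (c + y) \<in> S")
      assume A: "cmod (a + y) \<notin> S" and C: "cmod (c + y) \<in> S"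
      then have "cmod (a + y) \<le> cmod (c + y)" using S by force
      then have "cmod (R y) \<le> cmod y" using sg by blast
      then have "cgauss_density \<sigma> y \<le> cgauss_density \<sigma> (R y)" by (rule phi_mono)
      then show ?thesis using A C by (simp add: ea ec ennreal_leI)
    next
      assume A: "cmod (a + y) \<in> S" and C: "cmod (c + y) \<notin> S"
      then have "cmod (c + y) \<le> cmod (a + y)" using S by force
      then have "cmod y \<le> cmod (R y)" using sg by blast
      then have "cgauss_density \<sigma> (R y) \<le> cgauss_density \<sigma> y" by (rule phi_mono)
      then show ?thesis using A C by (simp add: ea ec ennreal_leI)
    qed (simp_all add: ea ec add.commute)
  qed
  then show ?thesis by (simp add: cgauss_integral)
qed

lemma space_cgauss[simp]: "space (cgauss \<sigma>) = UNIV"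
  by (simp add: cgauss_def)

lemma sets_cgauss[simp]: "sets (cgauss \<sigma>) = sets borel"
  by (simp add: cgauss_def)


definition Ev :: "nat \<Rightarrow> real \<Rightarrow> nat \<Rightarrow> (nat \<Rightarrow> complex) \<Rightarrow> (nat \<Rightarrow> complex) set" where
  "Ev M \<sigma> m c = {n \<in> space (noise_measure M \<sigma>).
        \<forall>k\<in>{1..M}. k \<noteq> m \<longrightarrow> cmod (c k + n k) < cmod (c m + n m)}"

lemma Ev_sets:
  assumes m: "m \<in> {1..M}"
  shows "Ev M \<sigma> m c \<in> sets (noise_measure M \<sigma>)"
proof -
  have [measurable]: "(\<lambda>n. n k) \<in> borel_measurable (noise_measure M \<sigma>)" if "k \<in> {1..M}" for k
  proof -
    have "(\<lambda>n. n k) \<in> measurable (PiM {1..M} (\<lambda>_. cgauss \<sigma>)) (cgauss \<sigma>)"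
      by (rule measurable_component_singleton) (use that in auto)
    then show ?thesis unfolding noise_measure_def
      using measurable_cong_sets[OF refl sets_cgauss, of "PiM {1..M} (\<lambda>_. cgauss \<sigma>)" \<sigma>] by simp
  qed
  show ?thesis unfolding Ev_def using m
    by measurable
qed

lemma emeasure_Ev_split:
  assumes s: "\<sigma> > 0" and m: "m \<in> {1..M}" and j: "j \<in> {1..M}"
  shows "emeasure (noise_measure M \<sigma>) (Ev M \<sigma> m c) =
    (\<integral>\<^sup>+x. (\<integral>\<^sup>+y. indicator (Ev M \<sigma> m c) (x(j := y)) \<partial>cgauss \<sigma>) \<partial>PiM ({1..M} - {j}) (\<lambda>_. cgauss \<sigma>))"
proof -
  interpret P: product_sigma_finite "\<lambda>_::nat. cgauss \<sigma>"
    unfolding product_sigma_finite_def using prob_space_imp_sigma_finite[OF prob_space_cgauss[OF s]] by simp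
  have ins: "insert j ({1..M} - {j}) = {1..M}" using j by auto
  have E: "Ev M \<sigma> m c \<in> sets (noise_measure M \<sigma>)" by (rule Ev_sets[OF m])
  have "emeasure (noise_measure M \<sigma>) (Ev M \<sigma> m c) = integral\<^sup>N (noise_measure M \<sigma>) (indicator (Ev M \<sigma> m c))"
    using E by simp
  also have "\<dots> = integral\<^sup>N (PiM (insert j ({1..M} - {j})) (\<lambda>_. cgauss \<sigma>)) (indicator (Ev M \<sigma> m c))"
    unfolding ins noise_measure_def ..
  also have "\<dots> = (\<integral>\<^sup>+x. (\<integral>\<^sup>+y. indicator (Ev M \<sigma> m c) (x(j := y)) \<partial>cgauss \<sigma>) \<partial>PiM ({1..M} - {j}) (\<lambda>_. cgauss \<sigma>))"
  proof (rule P.product_nn_integral_insert)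
    show "indicator (Ev M \<sigma> m c) \<in> borel_measurable (PiM (insert j ({1..M} - {j})) (\<lambda>_. cgauss \<sigma>))"
      unfolding ins using E by (simp add: noise_measure_def)
  qed auto
  finally show ?thesis .
qed

lemma upd_in_space:
  assumes "x \<in> space (PiM ({1..M} - {j}) (\<lambda>_. cgauss \<sigma>))" "j \<in> {1..M}"
  shows "x(j := y) \<in> space (noise_measure M \<sigma>)"
  using assms by (auto simp: noise_measure_def space_PiM PiE_def extensional_def)

lemma step_j:
  assumes s: "\<sigma> > 0" and m: "m \<in> {1..M}" and j: "j \<in> {1..M}" "j \<noteq> m" and ca: "cmod (c j) \<le> cmod a"
  shows "emeasure (noise_measure M \<sigma>) (Ev M \<sigma> m (c(j := a))) \<le> emeasure (noise_measure M \<sigma>) (Ev M \<sigma> m c)"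
  unfolding emeasure_Ev_split[OF s m j(1)]
proof (rule nn_integral_mono)
  fix x assume x: "x \<in> space (PiM ({1..M} - {j}) (\<lambda>_. cgauss \<sigma>))"
  define \<rho> where "\<rho> = cmod (c m + x m)"
  define Q where "Q = (\<forall>k\<in>{1..M}. k \<noteq> m \<and> k \<noteq> j \<longrightarrow> cmod (c k + x k) < \<rho>)"
  define S where "S = {d. Q \<and> d < \<rho>}"
  have Sb[measurable]: "S \<in> sets borel" unfolding S_def by (cases Q) auto
  have Sd: "\<And>d d'. d \<in> S \<Longrightarrow> d' \<notin> S \<Longrightarrow> d < d'" unfolding S_def by auto
  have i1: "indicator (Ev M \<sigma> m (c(j := a))) (x(j := y)) = (indicator S (cmod (a + y)) :: ennreal)" for y
    using upd_in_space[OF x j(1), of y] j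
    by (auto simp: indicator_def Ev_def S_def Q_def \<rho>_def)
  have i2: "indicator (Ev M \<sigma> m c) (x(j := y)) = (indicator S (cmod (c j + y)) :: ennreal)" for y
    using upd_in_space[OF x j(1), of y] j
    by (auto simp: indicator_def Ev_def S_def Q_def \<rho>_def)
  show "(\<integral>\<^sup>+y. indicator (Ev M \<sigma> m (c(j := a))) (x(j := y)) \<partial>cgauss \<sigma>)
      \<le> (\<integral>\<^sup>+y. indicator (Ev M \<sigma> m c) (x(j := y)) \<partial>cgauss \<sigma>)"
    unfolding i1 i2 by (rule key_down[OF ca Sd Sb])
qed

lemma step_m:
  assumes s: "\<sigma> > 0" and m: "m \<in> {1..M}" and ca: "cmod (c m) \<le> cmod a"
  shows "emeasure (noise_measure M \<sigma>) (Ev M \<sigma> m c) \<le> emeasure (noise_measure M \<sigma>) (Ev M \<sigma> m (c(m := a)))"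
  unfolding emeasure_Ev_split[OF s m m]
proof (rule nn_integral_mono)
  fix x assume x: "x \<in> space (PiM ({1..M} - {m}) (\<lambda>_. cgauss \<sigma>))"
  define S where "S = {d. \<forall>k\<in>{1..M}. k \<noteq> m \<longrightarrow> cmod (c k + x k) < d}"
  have Sb[measurable]: "S \<in> sets borel" unfolding S_def by measurable
  have Su: "\<And>d d'. d \<in> S \<Longrightarrow> d' \<notin> S \<Longrightarrow> d' < d" unfolding S_def by force
  have i1: "indicator (Ev M \<sigma> m (c(m := a))) (x(m := y)) = (indicator S (cmod (a + y)) :: ennreal)" for y
    using upd_in_space[OF x m, of y]
    by (auto simp: indicator_def Ev_def S_def)
  have i2: "indicator (Ev M \<sigma> m c) (x(m := y)) = (indicator S (cmod (c m + y)) :: ennreal)" for y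
    using upd_in_space[OF x m, of y]
    by (auto simp: indicator_def Ev_def S_def)
  show "(\<integral>\<^sup>+y. indicator (Ev M \<sigma> m c) (x(m := y)) \<partial>cgauss \<sigma>)
      \<le> (\<integral>\<^sup>+y. indicator (Ev M \<sigma> m (c(m := a))) (x(m := y)) \<partial>cgauss \<sigma>)"
    unfolding i1 i2 by (rule key_up[OF ca Su Sb])
qed

lemma Pc_Ev: "Pc M \<sigma> m c = measure (noise_measure M \<sigma>) (Ev M \<sigma> m c)"
  unfolding Pc_def Ev_def ..

lemma measure_le_from_emeasure:
  assumes s: "\<sigma> > 0"
    and le: "emeasure (noise_measure M \<sigma>) A \<le> emeasure (noise_measure M \<sigma>) B"
  shows "measure (noise_measure M \<sigma>) A \<le> measure (noise_measure M \<sigma>) B"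
proof -
  interpret N: prob_space "noise_measure M \<sigma>"
    unfolding noise_measure_def by (rule prob_space_PiM) (rule prob_space_cgauss[OF s])
  have "emeasure (noise_measure M \<sigma>) B \<le> 1" by (rule N.emeasure_le_1)
  then have "emeasure (noise_measure M \<sigma>) B < \<top>" using order.strict_trans1 by fastforce
  then show ?thesis unfolding measure_def
    using le by (intro enn2real_mono)
qed

theorem theorem1:
  fixes M :: nat and \<sigma> :: real and m :: nat and c :: "nat \<Rightarrow> complex"
  assumes "M \<ge> 2" and "\<sigma> > 0" and "m \<in> {1..M}"
  shows "(\<forall>a. cmod (c m) \<le> cmod a \<longrightarrow> Pc M \<sigma> m c \<le> Pc M \<sigma> m (c(m := a)))
       \<and> (\<forall>j\<in>{1..M}. j \<noteq> m \<longrightarrow>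
            (\<forall>a. cmod (c j) \<le> cmod a \<longrightarrow> Pc M \<sigma> m (c(j := a)) \<le> Pc M \<sigma> m c))"
  using assms step_m step_j measure_le_from_emeasure unfolding Pc_Ev by blast

end
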